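(* Let $F$ be a discrete time regulatory network on $[0,1]^d$ satisfying coordinatewise injectivity whose interaction matrix $K$ is non-degenerated, and let $(V,\mathcal A)$ be its underlying network. If $\{i,j\}\subset V$ is a 2-loop in $(V,\mathcal A)$ whose isolated end is $j$, then $i$ drives $j$.
   Context: $V=\{1,\dots,d\}$; $K\in[0,1]^{d\times d}$ with $\sum_iK_{i,j}=1$ for each $j$; $s\in\{-1,0,1\}^{d\times d}$, $T\in[0,1]^{d\times d}$ with $s_{i,j}=0$ iff $K_{i,j}=0$ and $T_{i,j}=0$ iff $K_{i,j}=0$; $a\in[0,1]$; $H(x)=0$ for $x\le0$, $1$ otherwise; $F(x)_j=ax_j+(1-a)\sum_iK_{i,j}H(s_{i,j}(x_i-T_{i,j}))$. Underlying network: $\mathcal A=\{(i,j):K_{i,j}>0\}$. Coordinatewise injectivity: for each $j$, with $\mathcal F_j=\{x\mapsto ax+(1-a)\sum_i\epsilon_iK_{i,j}:\epsilon\in\{0,1\}^d\}$, distinct $f,f'\in\mathcal F_j$ have $f([0,1])\cap f'([0,1])=\emptyset$. $K$ is non-degenerated if for each $j$ the map $\epsilon\mapsto\sum_i\epsilon_iK_{i,j}$, defined on $\{\epsilon\in\{0,1\}^d:\epsilon_i=0$ whenever $K_{i,j}=0\}$, is injective. A 2-loop with isolated end $j$ is a pair $\{i,j\}$ such that $(i,j)\in\mathcal A$ and $i$ is the only tail of an arrow with head $j$, and $(j,i)\in\mathcal A$ and $i$ is the only head of an arrow with tail $j$. Base partition: $\mathcal P_k$ is the set of nonempty level sets of $u\mapsto(H(s_{k,l}(u-T_{k,l})))_{l=1}^d$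 on $[0,1]$, $\mathcal P=\{\prod_kI_k:I_k\in\mathcal P_k\}$; $\mathcal P^1=\mathcal P$, $\mathcal P^{t+1}=\{F^{-1}(\mathbf I)\cap\mathbf J\ne\emptyset:\mathbf I\in\mathcal P^t,\mathbf J\in\mathcal P\}$; $\mathcal Q^t=\{F^{t-1}(\mathbf I):\mathbf I\in\mathcal P^t\}$, $\mathcal Q_k^t=\{\Pi_k\mathbf J:\mathbf J\in\mathcal Q^t\}$ ($\Pi_k$ the $k$-th coordinate projection). For $J\in\mathcal Q_i^t$ let $C_j(J)=\{\Pi_j\mathbf J:\mathbf J\in\mathcal Q^t,\ \Pi_i\mathbf J=J\}$. Vertex $i$ drives vertex $j$ if there is $m_{i,j}\in\mathbb N$ with $\#C_j(J)\le m_{i,j}$ for all $J\in\bigcup_{t\ge1}\mathcal Q_i^t$. *)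

theory Defs
  imports Complex_Main
begin

text \<open>Vertices are the elements of a finite type 'n (playing the role of V = {1..d});
  points of [0,1]^d are functions 'n \<Rightarrow> real.\<close>

definition heav :: "real \<Rightarrow> real" where
  "heav x = (if x \<le> 0 then 0 else 1)"

definition regnet_params ::
  "real \<Rightarrow> ('n::finite \<Rightarrow> 'n \<Rightarrow> real) \<Rightarrow> ('n \<Rightarrow> 'n \<Rightarrow> real) \<Rightarrow> ('n \<Rightarrow> 'n \<Rightarrow> real) \<Rightarrow> bool" where
  "regnet_params a K s T \<longleftrightarrow>
     a \<in> {0..1} \<and>
     (\<forall>i j. K i j \<in> {0..1}) \<and>
     (\<forall>j. (\<Sum>i\<in>UNIV. K i j) = 1) \<and>
     (\<forall>i j. s i j \<in> {-1, 0, 1}) \<and>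
     (\<forall>i j. T i j \<in> {0..1}) \<and>
     (\<forall>i j. s i j = 0 \<longleftrightarrow> K i j = 0) \<and>
     (\<forall>i j. T i j = 0 \<longleftrightarrow> K i j = 0)"

definition regF ::
  "real \<Rightarrow> ('n::finite \<Rightarrow> 'n \<Rightarrow> real) \<Rightarrow> ('n \<Rightarrow> 'n \<Rightarrow> real) \<Rightarrow> ('n \<Rightarrow> 'n \<Rightarrow> real)
   \<Rightarrow> ('n \<Rightarrow> real) \<Rightarrow> ('n \<Rightarrow> real)" where
  "regF a K s T x = (\<lambda>j. a * x j + (1 - a) * (\<Sum>i\<in>UNIV. K i j * heav (s i j * (x i - T i j))))"

definition arrows :: "('n::finite \<Rightarrow> 'n \<Rightarrow> real) \<Rightarrow> ('n \<times> 'n) set" where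
  "arrows K = {(i, j). K i j > 0}"

definition binvecs :: "('n::finite \<Rightarrow> real) set" where
  "binvecs = {e. \<forall>i. e i \<in> {0, 1}}"

definition famF :: "real \<Rightarrow> ('n::finite \<Rightarrow> 'n \<Rightarrow> real) \<Rightarrow> 'n \<Rightarrow> ('n \<Rightarrow> real) \<Rightarrow> real \<Rightarrow> real" where
  "famF a K j e = (\<lambda>x. a * x + (1 - a) * (\<Sum>i\<in>UNIV. e i * K i j))"

definition coordinatewise_injective :: "real \<Rightarrow> ('n::finite \<Rightarrow> 'n \<Rightarrow> real) \<Rightarrow> bool" where
  "coordinatewise_injective a K \<longleftrightarrow>
     (\<forall>j. \<forall>f \<in> famF a K j ` binvecs. \<forall>f' \<in> famF a K j ` binvecs.
        f \<noteq> f' \<longrightarrow> f ` {0..1} \<inter> f' ` {0..1} = {})"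

definition non_degenerated :: "('n::finite \<Rightarrow> 'n \<Rightarrow> real) \<Rightarrow> bool" where
  "non_degenerated K \<longleftrightarrow>
     (\<forall>j. inj_on (\<lambda>e. \<Sum>i\<in>UNIV. e i * K i j) {e \<in> binvecs. \<forall>i. K i j = 0 \<longrightarrow> e i = 0})"

definition two_loop_isolated_end :: "('n::finite \<Rightarrow> 'n \<Rightarrow> real) \<Rightarrow> 'n \<Rightarrow> 'n \<Rightarrow> bool" where
  "two_loop_isolated_end K i j \<longleftrightarrow>
     (i, j) \<in> arrows K \<and> (\<forall>i'. (i', j) \<in> arrows K \<longrightarrow> i' = i) \<and>
     (j, i) \<in> arrows K \<and> (\<forall>j'. (j, j') \<in> arrows K \<longrightarrow> j' = i)"

definition baseP_k :: "('n::finite \<Rightarrow> 'n \<Rightarrow> real) \<Rightarrow> ('n \<Rightarrow> 'n \<Rightarrow> real) \<Rightarrow> 'n \<Rightarrow> real set set" where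
  "baseP_k s T k = {I. I \<noteq> {} \<and> (\<exists>v. I = {u \<in> {0..1}. (\<lambda>l. heav (s k l * (u - T k l))) = v})}"

definition baseP :: "('n::finite \<Rightarrow> 'n \<Rightarrow> real) \<Rightarrow> ('n \<Rightarrow> 'n \<Rightarrow> real) \<Rightarrow> ('n \<Rightarrow> real) set set" where
  "baseP s T = {{x. \<forall>k. x k \<in> I k} | I. \<forall>k. I k \<in> baseP_k s T k}"

text \<open>partP a K s T n is \<P>^{n+1}.\<close>
fun partP :: "real \<Rightarrow> ('n::finite \<Rightarrow> 'n \<Rightarrow> real) \<Rightarrow> ('n \<Rightarrow> 'n \<Rightarrow> real) \<Rightarrow> ('n \<Rightarrow> 'n \<Rightarrow> real)
   \<Rightarrow> nat \<Rightarrow> ('n \<Rightarrow> real) set set" where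
  "partP a K s T 0 = baseP s T"
| "partP a K s T (Suc n) =
     {regF a K s T -` I \<inter> J | I J. I \<in> partP a K s T n \<and> J \<in> baseP s T \<and> regF a K s T -` I \<inter> J \<noteq> {}}"

text \<open>partQ a K s T n is \<Q>^{n+1} = { F^n(I) : I \<in> \<P>^{n+1} }.\<close>
definition partQ :: "real \<Rightarrow> ('n::finite \<Rightarrow> 'n \<Rightarrow> real) \<Rightarrow> ('n \<Rightarrow> 'n \<Rightarrow> real) \<Rightarrow> ('n \<Rightarrow> 'n \<Rightarrow> real)
   \<Rightarrow> nat \<Rightarrow> ('n \<Rightarrow> real) set set" where
  "partQ a K s T n = (\<lambda>I. (regF a K s T ^^ n) ` I) ` partP a K s T n"

definition partQk :: "real \<Rightarrow> ('n::finite \<Rightarrow> 'n \<Rightarrow> real) \<Rightarrow> ('n \<Rightarrow> 'n \<Rightarrow> real) \<Rightarrow> ('n \<Rightarrow> 'n \<Rightarrow> real)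
   \<Rightarrow> nat \<Rightarrow> 'n \<Rightarrow> real set set" where
  "partQk a K s T n k = (\<lambda>J. (\<lambda>x. x k) ` J) ` partQ a K s T n"

definition Cset :: "real \<Rightarrow> ('n::finite \<Rightarrow> 'n \<Rightarrow> real) \<Rightarrow> ('n \<Rightarrow> 'n \<Rightarrow> real) \<Rightarrow> ('n \<Rightarrow> 'n \<Rightarrow> real)
   \<Rightarrow> nat \<Rightarrow> 'n \<Rightarrow> 'n \<Rightarrow> real set \<Rightarrow> real set set" where
  "Cset a K s T n i j J = {(\<lambda>x. x j) ` JJ | JJ. JJ \<in> partQ a K s T n \<and> (\<lambda>x. x i) ` JJ = J}"

text \<open>i drives j: the number of j-projections compatible with a given i-projection is
  uniformly bounded over all t \<ge> 1 (t = n+1).\<close>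
definition drives :: "real \<Rightarrow> ('n::finite \<Rightarrow> 'n \<Rightarrow> real) \<Rightarrow> ('n \<Rightarrow> 'n \<Rightarrow> real) \<Rightarrow> ('n \<Rightarrow> 'n \<Rightarrow> real)
   \<Rightarrow> 'n \<Rightarrow> 'n \<Rightarrow> bool" where
  "drives a K s T i j \<longleftrightarrow>
     (\<exists>m::nat. \<forall>n. \<forall>J \<in> partQk a K s T n i.
        finite (Cset a K s T n i j J) \<and> card (Cset a K s T n i j J) \<le> m)"

end

theory Submission
  imports Defs
begin

lemma sum_single:
  fixes f :: "'n::finite \<Rightarrow> real"
  assumes "\<And>l. l \<noteq> i \<Longrightarrow> f l = 0"
  shows "(\<Sum>l\<in>UNIV. f l) = f i"
proof -
  have "(\<Sum>l\<in>UNIV. f l) = f i + (\<Sum>l\<in>UNIV - {i}. f l)"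
    by (rule sum.remove) auto
  also have "(\<Sum>l\<in>UNIV - {i}. f l) = 0" using assms by (intro sum.neutral) auto
  finally show ?thesis by simp
qed

lemma heav_01: "heav u \<in> {0, 1}" by (simp add: heav_def)
lemma heav_ge: "0 \<le> heav u" by (simp add: heav_def)
lemma heav_le: "heav u \<le> 1" by (simp add: heav_def)

lemma all_le_Suc: "(\<forall>t\<le>Suc n. P t) \<longleftrightarrow> P 0 \<and> (\<forall>t\<le>n. P (Suc t))"
  by (metis Suc_le_mono le0 not0_implies_Suc)

locale netw =
  fixes a :: real and K s T :: "'n::finite \<Rightarrow> 'n \<Rightarrow> real" and i j :: 'n
  assumes P: "regnet_params a K s T"
    and CI: "coordinatewise_injective a K"
    and ND: "non_degenerated K"
    and TL: "two_loop_isolated_end K i j"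
    and ij: "i \<noteq> j"
begin

abbreviation F where "F \<equiv> regF a K s T"
definition D :: "('n \<Rightarrow> real) set" where "D = {x. \<forall>k. x k \<in> {0..1}}"
definition h where "h u = heav (s j i * (u - T j i))"
definition e where "e u = heav (s i j * (u - T i j))"

lemma a01: "0 \<le> a" "a \<le> 1" using P by (auto simp: regnet_params_def)
lemma K_nonneg: "K l k \<ge> 0" using P by (auto simp: regnet_params_def)
lemma K_sum: "(\<Sum>l\<in>UNIV. K l k) = 1" using P by (auto simp: regnet_params_def)
lemma K_zero: "(l, k) \<notin> arrows K \<Longrightarrow> K l k = 0"
  using K_nonneg[of l k] by (auto simp: arrows_def)
lemma K_col_j: "l \<noteq> i \<Longrightarrow> K l j = 0" using TL K_zero unfolding two_loop_isolated_end_def by blast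
lemma K_row_j: "k \<noteq> i \<Longrightarrow> K j k = 0" using TL K_zero unfolding two_loop_isolated_end_def by blast
lemma s_row_j: "k \<noteq> i \<Longrightarrow> s j k = 0" using K_row_j P by (auto simp: regnet_params_def)
lemma Kji_pos: "K j i > 0" using TL unfolding two_loop_isolated_end_def arrows_def by auto

lemma F_j: "F x j = a * x j + (1 - a) * (K i j * e (x i))"
  unfolding regF_def e_def by (subst sum_single[of i]) (auto simp: K_col_j)

lemma F_D: assumes "x \<in> D" shows "F x \<in> D"
  unfolding D_def
proof (intro CollectI allI)
  fix k
  let ?S = "\<Sum>l\<in>UNIV. K l k * heav (s l k * (x l - T l k))"
  have S0: "0 \<le> ?S" by (intro sum_nonneg mult_nonneg_nonneg K_nonneg heav_ge)
  have "?S \<le> (\<Sum>l\<in>UNIV. K l k)"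
    by (intro sum_mono) (simp add: K_nonneg heav_le mult_left_le)
  then have S1: "?S \<le> 1" using K_sum by simp
  have xk: "0 \<le> x k" "x k \<le> 1" using assms by (auto simp: D_def)
  have "a * x k \<le> a" using xk a01 by (simp add: mult_left_le)
  moreover have "(1 - a) * ?S \<le> 1 - a" using S1 a01 by (simp add: mult_left_le)
  moreover have "0 \<le> a * x k" using xk a01 by simp
  moreover have "0 \<le> (1 - a) * ?S" using S0 a01 by simp
  ultimately show "F x k \<in> {0..1}" unfolding regF_def by auto
qed

lemma orbit_D: "x \<in> D \<Longrightarrow> (F ^^ t) x \<in> D"
  by (induction t) (auto intro: F_D)

lemma swap_step:
  assumes "(1 - a) * e (y i) = (1 - a) * e (y' i)" "(1 - a) * h (y j) = (1 - a) * h (y' j)"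
  shows "F (y(j := y' j)) = (F y)(j := F y' j)"
proof
  fix k
  show "F (y(j := y' j)) k = ((F y)(j := F y' j)) k"
  proof (cases "k = j")
    case True
    have "(1 - a) * (K i j * e (y i)) = (1 - a) * (K i j * e (y' i))"
      using assms(1) by (metis mult.left_commute)
    then show ?thesis using True ij by (simp add: F_j)
  next
    case False
    have eq: "(1 - a) * (K l k * heav (s l k * ((y(j := y' j)) l - T l k)))
        = (1 - a) * (K l k * heav (s l k * (y l - T l k)))" for l
    proof (cases "l = j")
      case True
      show ?thesis
      proof (cases "k = i")
        case True
        then show ?thesis using \<open>l = j\<close> assms(2) unfolding h_def by (metis fun_upd_same mult.left_commute)
      next
        case False
        then show ?thesis using \<open>l = j\<close> K_row_j by simp
      qed
    qed simp
    have ss: "(1 - a) * (\<Sum>l\<in>UNIV. K l k * heav (s l k * ((y(j := y' j)) l - T l k)))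
        = (1 - a) * (\<Sum>l\<in>UNIV. K l k * heav (s l k * (y l - T l k)))"
      unfolding sum_distrib_left eq by (rule refl)
    from ss show ?thesis using False unfolding regF_def by simp
  qed
qed

lemma swap:
  assumes "\<forall>t<n. (1 - a) * e ((F^^t) x i) = (1 - a) * e ((F^^t) x' i)
                 \<and> (1 - a) * h ((F^^t) x j) = (1 - a) * h ((F^^t) x' j)"
  shows "t \<le> n \<Longrightarrow> (F^^t) (x(j := x' j)) = ((F^^t) x)(j := (F^^t) x' j)"
proof (induction t)
  case 0 then show ?case by simp
next
  case (Suc t)
  then have "t < n" by simp
  have fs: "(F^^Suc t) y = F ((F^^t) y)" for y by simp
  have ih: "(F^^t) (x(j := x' j)) = ((F^^t) x)(j := (F^^t) x' j)"
    using Suc.IH[OF Suc_leD[OF Suc.prems]] unfolding fun_upd_def .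
  have "(F^^Suc t) (x(j := x' j)) = F (((F^^t) x)(j := (F^^t) x' j))"
    by (simp only: funpow.simps comp_def ih)
  also have "\<dots> = (F ((F^^t) x))(j := F ((F^^t) x') j)"
    by (rule swap_step) (use assms \<open>t < n\<close> in auto)
  finally show ?case by (simp only: fs)
qed

lemma decode1:
  assumes a: "0 < a" "a < 1" and D: "y \<in> D" "y' \<in> D" and eq: "F y i = F y' i"
  shows "y i = y' i \<and> h (y j) = h (y' j)"
proof -
  define \<epsilon> where "\<epsilon> = (\<lambda>l. heav (s l i * (y l - T l i)))"
  define \<epsilon>' where "\<epsilon>' = (\<lambda>l. heav (s l i * (y' l - T l i)))"
  have b: "\<epsilon> \<in> binvecs" "\<epsilon>' \<in> binvecs" unfolding binvecs_def \<epsilon>_def \<epsilon>'_def using heav_01 by auto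
  have Fy: "F y i = famF a K i \<epsilon> (y i)" "F y' i = famF a K i \<epsilon>' (y' i)"
    unfolding regF_def famF_def \<epsilon>_def \<epsilon>'_def by (simp_all add: mult.commute[of "K _ i"])
  have yi: "y i \<in> {0..1}" "y' i \<in> {0..1}" using D by (auto simp: D_def)
  have "famF a K i \<epsilon> = famF a K i \<epsilon>'"
  proof (rule ccontr)
    assume "famF a K i \<epsilon> \<noteq> famF a K i \<epsilon>'"
    then have "famF a K i \<epsilon> ` {0..1} \<inter> famF a K i \<epsilon>' ` {0..1} = {}"
      using CI b unfolding coordinatewise_injective_def by blast
    moreover have "F y i \<in> famF a K i \<epsilon> ` {0..1}"
      by (rule image_eqI[of _ _ "y i"]) (use Fy(1) yi in auto)
    moreover have "F y i \<in> famF a K i \<epsilon>' ` {0..1}"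
    proof (rule image_eqI[of _ _ "y' i"])
      show "F y i = famF a K i \<epsilon>' (y' i)" using Fy(2) eq by simp
    qed (use yi in auto)
    ultimately show False by blast
  qed
  then have "famF a K i \<epsilon> 0 = famF a K i \<epsilon>' 0" by simp
  then have S: "(\<Sum>l\<in>UNIV. \<epsilon> l * K l i) = (\<Sum>l\<in>UNIV. \<epsilon>' l * K l i)"
    using a by (simp add: famF_def)
  have "y i = y' i" using Fy eq S a by (simp add: famF_def)
  define z where "z = (\<lambda>l. if K l i = 0 then 0 else \<epsilon> l)"
  define z' where "z' = (\<lambda>l. if K l i = 0 then 0 else \<epsilon>' l)"
  have zb: "z \<in> {e \<in> binvecs. \<forall>l. K l i = 0 \<longrightarrow> e l = 0}" "z' \<in> {e \<in> binvecs. \<forall>l. K l i = 0 \<longrightarrow> e l = 0}"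
    using b unfolding z_def z'_def binvecs_def by auto
  have "(\<Sum>l\<in>UNIV. z l * K l i) = (\<Sum>l\<in>UNIV. \<epsilon> l * K l i)"
       "(\<Sum>l\<in>UNIV. z' l * K l i) = (\<Sum>l\<in>UNIV. \<epsilon>' l * K l i)"
    unfolding z_def z'_def by (auto intro!: sum.cong)
  then have "(\<Sum>l\<in>UNIV. z l * K l i) = (\<Sum>l\<in>UNIV. z' l * K l i)" using S by simp
  moreover have inj: "inj_on (\<lambda>e. \<Sum>l\<in>UNIV. e l * K l i) {e \<in> binvecs. \<forall>l. K l i = 0 \<longrightarrow> e l = 0}"
    using ND unfolding non_degenerated_def by blast
  ultimately have "z = z'" using inj_onD[OF inj _ zb(1) zb(2)] by blast
  then have "z j = z' j" by simp
  then have "\<epsilon> j = \<epsilon>' j" using Kji_pos unfolding z_def z'_def by (simp split: if_splits)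
  then show ?thesis using \<open>y i = y' i\<close> unfolding \<epsilon>_def \<epsilon>'_def h_def by simp
qed

lemma decode:
  assumes a: "0 < a" "a < 1" and D: "x \<in> D" "x' \<in> D"
  shows "(F^^n) x i = (F^^n) x' i \<Longrightarrow>
     \<forall>t\<le>n. (F^^t) x i = (F^^t) x' i \<and> (t < n \<longrightarrow> h ((F^^t) x j) = h ((F^^t) x' j))"
proof (induction n)
  case 0 then show ?case by simp
next
  case (Suc n)
  have "F ((F^^n) x) i = F ((F^^n) x') i" using Suc.prems by simp
  then have d: "(F^^n) x i = (F^^n) x' i \<and> h ((F^^n) x j) = h ((F^^n) x' j)"
    using decode1[OF a orbit_D[OF D(1)] orbit_D[OF D(2)]] by blast
  then have IH: "\<forall>t\<le>n. (F^^t) x i = (F^^t) x' i \<and> (t < n \<longrightarrow> h ((F^^t) x j) = h ((F^^t) x' j))"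
    using Suc.IH by blast
  show ?case
  proof (intro allI impI)
    fix t assume "t \<le> Suc n"
    then consider "t \<le> n" | "t = Suc n" by linarith
    then show "(F^^t) x i = (F^^t) x' i \<and> (t < Suc n \<longrightarrow> h ((F^^t) x j) = h ((F^^t) x' j))"
    proof cases
      case 1 then show ?thesis using IH d by (cases "t = n") auto
    next
      case 2 then show ?thesis using Suc.prems by simp
    qed
  qed
qed


lemma bP_D: "B \<in> baseP s T \<Longrightarrow> B \<subseteq> D"
  unfolding baseP_def baseP_k_def D_def by auto

lemma bP_same:
  assumes "B \<in> baseP s T" "y \<in> B" "y' \<in> B"
  shows "heav (s k l * (y k - T k l)) = heav (s k l * (y' k - T k l))"
proof -
  obtain I where I: "B = {x. \<forall>k. x k \<in> I k}" "\<forall>k. I k \<in> baseP_k s T k"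
    using assms(1) unfolding baseP_def by blast
  obtain v where v: "I k = {u \<in> {0..1}. (\<lambda>l. heav (s k l * (u - T k l))) = v}"
    using I(2) unfolding baseP_k_def by blast
  have "y k \<in> I k" "y' k \<in> I k" using I(1) assms(2,3) by auto
  then have "(\<lambda>l. heav (s k l * (y k - T k l))) = (\<lambda>l. heav (s k l * (y' k - T k l)))"
    using v by auto
  from fun_cong[OF this, of l] show ?thesis by simp
qed

lemma bP_mem:
  assumes "B \<in> baseP s T" "y \<in> B" "y' \<in> D"
    and eq: "\<And>k l. heav (s k l * (y' k - T k l)) = heav (s k l * (y k - T k l))"
  shows "y' \<in> B"
proof -
  obtain I where I: "B = {x. \<forall>k. x k \<in> I k}" "\<forall>k. I k \<in> baseP_k s T k"
    using assms(1) unfolding baseP_def by blast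
  have "y' k \<in> I k" for k
  proof -
    obtain v where v: "I k = {u \<in> {0..1}. (\<lambda>l. heav (s k l * (u - T k l))) = v}"
      using I(2) unfolding baseP_k_def by blast
    have "y k \<in> I k" using I(1) assms(2) by auto
    then have "(\<lambda>l. heav (s k l * (y k - T k l))) = v" using v by auto
    moreover have "(\<lambda>l. heav (s k l * (y' k - T k l))) = (\<lambda>l. heav (s k l * (y k - T k l)))"
      using eq by auto
    moreover have "y' k \<in> {0..1}" using assms(3) by (auto simp: D_def)
    ultimately show ?thesis using v by auto
  qed
  then show ?thesis using I(1) by auto
qed

lemma bP_ne: assumes "B \<in> baseP s T" shows "B \<noteq> {}"
proof -
  obtain I where I: "B = {x. \<forall>k. x k \<in> I k}" "\<forall>k. I k \<in> baseP_k s T k"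
    using assms(1) unfolding baseP_def by blast
  have "I k \<noteq> {}" for k using I(2) unfolding baseP_k_def by auto
  then have "(\<lambda>k. SOME u. u \<in> I k) \<in> B" using I(1) by (simp add: some_in_eq)
  then show ?thesis by auto
qed

lemma itin: "X \<in> partP a K s T n \<Longrightarrow>
  \<exists>B. (\<forall>t\<le>n. B t \<in> baseP s T) \<and> X = {x. \<forall>t\<le>n. (F^^t) x \<in> B t} \<and> X \<noteq> {}"
proof (induction n arbitrary: X)
  case 0
  then have "X \<in> baseP s T" by simp
  then show ?case using bP_ne by (intro exI[of _ "\<lambda>_. X"]) auto
next
  case (Suc n)
  then obtain I J where IJ: "X = F -` I \<inter> J" "I \<in> partP a K s T n" "J \<in> baseP s T" "X \<noteq> {}"
    by auto
  obtain B where B: "\<forall>t\<le>n. B t \<in> baseP s T" "I = {x. \<forall>t\<le>n. (F^^t) x \<in> B t}"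
    using Suc.IH[OF IJ(2)] by blast
  define B' where "B' = case_nat J B"
  have "\<forall>t\<le>Suc n. B' t \<in> baseP s T" unfolding B'_def all_le_Suc using B IJ by simp
  moreover have "X = {x. \<forall>t\<le>Suc n. (F^^t) x \<in> B' t}"
    unfolding B'_def all_le_Suc IJ(1) B(2) by (auto simp: funpow_swap1)
  ultimately show ?case using IJ(4) by blast
qed

lemma partP_D: "X \<in> partP a K s T n \<Longrightarrow> x \<in> X \<Longrightarrow> x \<in> D"
proof -
  assume "X \<in> partP a K s T n" "x \<in> X"
  then obtain B where "\<forall>t\<le>n. B t \<in> baseP s T" "X = {x. \<forall>t\<le>n. (F^^t) x \<in> B t}"
    using itin by blast
  then have "x \<in> B 0" "B 0 \<in> baseP s T" using \<open>x \<in> X\<close> by auto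
  then show "x \<in> D" using bP_D by blast
qed

lemma partP_const:
  assumes "X \<in> partP a K s T n" "x \<in> X" "x' \<in> X"
  shows "h ((F^^n) x j) = h ((F^^n) x' j)"
proof -
  obtain B where "\<forall>t\<le>n. B t \<in> baseP s T" "X = {x. \<forall>t\<le>n. (F^^t) x \<in> B t}"
    using itin assms(1) by blast
  then have "(F^^n) x \<in> B n" "(F^^n) x' \<in> B n" "B n \<in> baseP s T" using assms(2,3) by auto
  then show ?thesis unfolding h_def by (rule bP_same[rotated 1])
qed

lemma F_id: "a = 1 \<Longrightarrow> (F^^t) x = x"
  by (induction t) (auto simp: regF_def)

lemma claim:
  assumes na: "\<not> (a = 0 \<and> n > 0)" and X: "X1 \<in> partP a K s T n" "X2 \<in> partP a K s T n"
    and x: "x1 \<in> X1" "x2 \<in> X2" and eqi: "(F^^n) x1 i = (F^^n) x2 i"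
    and eqh: "h ((F^^n) x1 j) = h ((F^^n) x2 j)"
  shows "\<exists>z\<in>X2. (F^^n) z j = (F^^n) x1 j"
proof -
  obtain B2 where B2: "\<forall>t\<le>n. B2 t \<in> baseP s T" "X2 = {x. \<forall>t\<le>n. (F^^t) x \<in> B2 t}"
    using itin X(2) by blast
  have D: "x1 \<in> D" "x2 \<in> D" using partP_D X x by auto
  have HR: "(\<forall>t<n. (1 - a) * e ((F^^t) x2 i) = (1 - a) * e ((F^^t) x1 i)
                 \<and> (1 - a) * h ((F^^t) x2 j) = (1 - a) * h ((F^^t) x1 j))
          \<and> (\<forall>t\<le>n. h ((F^^t) x1 j) = h ((F^^t) x2 j))"
  proof (cases "n = 0")
    case True then show ?thesis using eqh by simp
  next
    case False
    show ?thesis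
    proof (cases "a = 1")
      case True then show ?thesis using eqh F_id by simp
    next
      case False
      then have a: "0 < a" "a < 1" using na \<open>n \<noteq> 0\<close> a01 by auto
      have dd: "\<forall>t\<le>n. (F^^t) x1 i = (F^^t) x2 i \<and> (t < n \<longrightarrow> h ((F^^t) x1 j) = h ((F^^t) x2 j))"
        using decode[OF a D eqi] .
      show ?thesis
      proof (rule conjI; intro allI impI)
        fix t assume "t < n"
        then have "(F^^t) x1 i = (F^^t) x2 i" "h ((F^^t) x1 j) = h ((F^^t) x2 j)" using dd by auto
        then show "(1 - a) * e ((F^^t) x2 i) = (1 - a) * e ((F^^t) x1 i)
                 \<and> (1 - a) * h ((F^^t) x2 j) = (1 - a) * h ((F^^t) x1 j)" by simp
      next
        fix t assume "t \<le> n"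
        then show "h ((F^^t) x1 j) = h ((F^^t) x2 j)"
        proof (cases "t = n")
          case True then show ?thesis using eqh by simp
        next
          case False then show ?thesis using dd \<open>t \<le> n\<close> by simp
        qed
      qed
    qed
  qed
  define z where "z = x2(j := x1 j)"
  have sw: "(F^^t) z = ((F^^t) x2)(j := (F^^t) x1 j)" if "t \<le> n" for t
    unfolding z_def using swap[of n x2 x1 t] HR that by blast
  have zD: "z \<in> D" using D unfolding z_def D_def by auto
  have "(F^^t) z \<in> B2 t" if t: "t \<le> n" for t
  proof (rule bP_mem)
    show "B2 t \<in> baseP s T" using B2 t by auto
    show "(F^^t) x2 \<in> B2 t" using B2 t x by auto
    show "(F^^t) z \<in> D" using orbit_D[OF zD] .
    fix k l
    show "heav (s k l * ((F^^t) z k - T k l)) = heav (s k l * ((F^^t) x2 k - T k l))"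
    proof (cases "k = j")
      case True
      show ?thesis
      proof (cases "l = i")
        case True
        then show ?thesis using \<open>k = j\<close> sw[OF t] HR t unfolding h_def by simp
      next
        case False
        then show ?thesis using \<open>k = j\<close> s_row_j by simp
      qed
    next
      case False then show ?thesis using sw[OF t] by simp
    qed
  qed
  then have "z \<in> X2" using B2 by auto
  moreover have "(F^^n) z j = (F^^n) x1 j" using sw by simp
  ultimately show ?thesis by blast
qed

lemma sub:
  assumes na: "\<not> (a = 0 \<and> n > 0)" and X: "X1 \<in> partP a K s T n" "X2 \<in> partP a K s T n"
    and pi: "(\<lambda>x. x i) ` (F^^n) ` X1 = (\<lambda>x. x i) ` (F^^n) ` X2"
    and x: "x1' \<in> X1" "x2' \<in> X2" and eqh: "h ((F^^n) x1' j) = h ((F^^n) x2' j)"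
  shows "(\<lambda>x. x j) ` (F^^n) ` X1 \<subseteq> (\<lambda>x. x j) ` (F^^n) ` X2"
proof
  fix y assume "y \<in> (\<lambda>x. x j) ` (F^^n) ` X1"
  then obtain x where xx: "x \<in> X1" "y = (F^^n) x j" by auto
  have "(F^^n) x i \<in> (\<lambda>x. x i) ` (F^^n) ` X1" using xx by blast
  then have "(F^^n) x i \<in> (\<lambda>x. x i) ` (F^^n) ` X2" using pi by simp
  then obtain x2 where x2: "x2 \<in> X2" "(F^^n) x i = (F^^n) x2 i" by auto
  have "h ((F^^n) x j) = h ((F^^n) x2 j)"
    using partP_const[OF X(1) xx(1) x(1)] partP_const[OF X(2) x2(1) x(2)] eqh by simp
  then obtain z where z: "z \<in> X2" "(F^^n) z j = (F^^n) x j"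
    using claim[OF na X xx(1) x2] by blast
  have zz: "(F^^n) z \<in> (F^^n) ` X2" using z by blast
  show "y \<in> (\<lambda>x. x j) ` (F^^n) ` X2"
    by (rule image_eqI[OF _ zz]) (use z xx in simp)
qed

lemma count: "finite (Cset a K s T n i j J) \<and> card (Cset a K s T n i j J) \<le> 4"
proof (cases "a = 0 \<and> n > 0")
  case True
  then obtain m where m: "n = Suc m" "a = 0" using gr0_implies_Suc by blast
  have all: "(F^^n) x j \<in> {0, K i j}" for x
  proof -
    have "(F^^n) x j = F ((F^^m) x) j" using m(1) by simp
    also have "\<dots> = K i j * e ((F^^m) x i)" using F_j m(2) by simp
    finally have eq: "(F^^n) x j = K i j * e ((F^^m) x i)" .
    have "e ((F^^m) x i) = 0 \<or> e ((F^^m) x i) = 1" using heav_01 unfolding e_def by simp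
    then show ?thesis using eq by auto
  qed
  have sub: "Cset a K s T n i j J \<subseteq> Pow {0, K i j}"
  proof
    fix c assume "c \<in> Cset a K s T n i j J"
    then obtain X where c: "c = (\<lambda>x. x j) ` (F^^n) ` X"
      unfolding Cset_def partQ_def by blast
    show "c \<in> Pow {0, K i j}" unfolding c using all by blast
  qed
  have c2: "card {0, K i j} \<le> 2" by (cases "K i j = 0") simp_all
  have "card (Pow {0, K i j}) \<le> 4"
    using power_increasing[OF c2, of "2::nat"] by (simp add: card_Pow)
  moreover have fP: "finite (Pow {0, K i j})" by simp
  ultimately show ?thesis using finite_subset[OF sub fP] card_mono[OF fP sub] by simp
next
  case na: False
  let ?C = "Cset a K s T n i j J"
  have ex: "\<exists>X. X \<in> partP a K s T n \<and> c = (\<lambda>x. x j) ` (F^^n) ` X \<and> (\<lambda>x. x i) ` (F^^n) ` X = J"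
    if "c \<in> ?C" for c using that unfolding Cset_def partQ_def by blast
  define Xof where "Xof c = (SOME X. X \<in> partP a K s T n \<and> c = (\<lambda>x. x j) ` (F^^n) ` X \<and> (\<lambda>x. x i) ` (F^^n) ` X = J)" for c
  have Xof: "Xof c \<in> partP a K s T n \<and> c = (\<lambda>x. x j) ` (F^^n) ` Xof c \<and> (\<lambda>x. x i) ` (F^^n) ` Xof c = J"
    if "c \<in> ?C" for c using someI_ex[OF ex[OF that]] unfolding Xof_def .
  define xof where "xof c = (SOME x. x \<in> Xof c)" for c
  have xof: "xof c \<in> Xof c" if "c \<in> ?C" for c
  proof -
    have "Xof c \<noteq> {}" using Xof[OF that] itin by blast
    then show ?thesis unfolding xof_def by (simp add: some_in_eq)
  qed
  define g where "g c = h ((F^^n) (xof c) j)" for c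
  have le: "c1 \<subseteq> c2" if "c1 \<in> ?C" "c2 \<in> ?C" "g c1 = g c2" for c1 c2
  proof -
    have P1: "Xof c1 \<in> partP a K s T n" and e1: "c1 = (\<lambda>x. x j) ` (F^^n) ` Xof c1"
      and i1: "(\<lambda>x. x i) ` (F^^n) ` Xof c1 = J" using Xof[OF that(1)] by blast+
    have P2: "Xof c2 \<in> partP a K s T n" and e2: "c2 = (\<lambda>x. x j) ` (F^^n) ` Xof c2"
      and i2: "(\<lambda>x. x i) ` (F^^n) ` Xof c2 = J" using Xof[OF that(2)] by blast+
    have pieq: "(\<lambda>x. x i) ` (F^^n) ` Xof c1 = (\<lambda>x. x i) ` (F^^n) ` Xof c2"
      using i1 i2 by (simp only:)
    have "h ((F^^n) (xof c1) j) = h ((F^^n) (xof c2) j)" using that(3) unfolding g_def .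
    then have "(\<lambda>x. x j) ` (F^^n) ` Xof c1 \<subseteq> (\<lambda>x. x j) ` (F^^n) ` Xof c2"
      by (rule sub[OF na P1 P2 pieq xof[OF that(1)] xof[OF that(2)]])
    then show ?thesis by (simp only: e1[symmetric] e2[symmetric])
  qed
  have inj: "inj_on g ?C"
    by (rule inj_onI) (metis le subset_antisym)
  have gC: "g ` ?C \<subseteq> {0, 1}" unfolding g_def h_def using heav_01 by auto
  then have fin: "finite (g ` ?C)" by (rule finite_subset) simp
  then have "finite ?C" using finite_imageD inj by blast
  moreover have "card ?C = card (g ` ?C)" using card_image[OF inj] by simp
  moreover have "card (g ` ?C) \<le> card {0, 1::real}" by (rule card_mono[OF _ gC]) simp
  ultimately show ?thesis by simp
qed

end

theorem mainTheorem10: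
  fixes a :: real and K s T :: "'n::finite \<Rightarrow> 'n \<Rightarrow> real" and i j :: 'n
  assumes "regnet_params a K s T"
    and "coordinatewise_injective a K"
    and "non_degenerated K"
    and "two_loop_isolated_end K i j"
  shows "drives a K s T i j"
proof (cases "i = j")
  case True
  have "Cset a K s T n i j J \<subseteq> {J}" for n J unfolding Cset_def using True by auto
  have "finite (Cset a K s T n i j J) \<and> card (Cset a K s T n i j J) \<le> 4" for n J
  proof
    show "finite (Cset a K s T n i j J)" using \<open>Cset a K s T n i j J \<subseteq> {J}\<close> finite_subset by blast
    have "card (Cset a K s T n i j J) \<le> card {J}" by (rule card_mono) (use \<open>Cset a K s T n i j J \<subseteq> {J}\<close> in auto)
    then show "card (Cset a K s T n i j J) \<le> 4" by simp
  qed
  then show ?thesis unfolding drives_def by blast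
next
  case False
  interpret netw a K s T i j using assms False by unfold_locales
  show ?thesis unfolding drives_def using count by blast
qed

end
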